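(* Let $d, K \ge 1$ be integers, $\lambda>0$, $\epsilon>0$, and let $a^*\in[K]=\{1,\dots,K\}$ be a target arm. For each arm $a\in[K]$ let $X_a\in\mathbb{R}^{m_a\times d}$ (historical contexts), $y_a\in\mathbb{R}^{m_a}$ (historical rewards), $V_a=X_a^\top X_a+\lambda I$, and let $\alpha_a\in\mathbb{R}$ be a fixed number (not depending on the rewards or their modification). For $x\in\mathbb{R}^d$ write $\|x\|_{V_a^{-1}}=\sqrt{x^\top V_a^{-1}x}$. Say that $x$ can be $\epsilon$-strongly attacked into pulling $a^*$ if there exist vectors $\Delta_a\in\mathbb{R}^{m_a}$, $a\in[K]$, such that, with $\hat\theta_a=V_a^{-1}X_a^\top(y_a+\Delta_a)$, $$x^\top\hat\theta_{a^*}+\alpha_{a^*}\|x\|_{V_{a^*}^{-1}}\ \ge\ \epsilon+x^\top\hat\theta_a+\alpha_a\|x\|_{V_a^{-1}}\quad\text{for all } a\neq a^*.$$ Then a context $x\in\mathbb{R}^d$ cannot be $\epsilon$-strongly attacked into pulling $a^*$ if and only if there exists $a\neq a^*$ such that both (i) $x\in\operatorname{Null}(X_{a^*})\cap\operatorname{Null}(X_a)$ and (ii) $\alpha_{a^*}\|x\|_{V_{a^*}^{-1}}<\epsilon+\alpha_a\|x\|_{V_a^{-1}}$ hold.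
   Context: This is the setting of a linear contextual bandit with UCB-type arm selection: after ridge regression on (possibly modified) historical rewards, the algorithm picks for context $x$ the arm maximizing $x^\top\hat\theta_a+\alpha_a\|x\|_{V_a^{-1}}$. An attacker may replace each reward vector $y_a$ by $y_a+\Delta_a$ with arbitrary real $\Delta_a$; the contexts $X_a$ and the exploration parameters $\alpha_a$ are unaffected. $\operatorname{Null}(M)$ denotes the null space $\{x: Mx=0\}$. *)

theory Defs
  imports "HOL-Analysis.Analysis"
begin

text \<open>Arm a has m a historical rows; the i-th row (i < m a) of the context matrix X_a is
  the vector X a i in R^d, the reward is y a i.  Thus X_a^T X_a = sum of outer products
  of the rows, and X_a^T v = sum of v i times row i.\<close>

definition gram :: "(nat \<Rightarrow> real^'d) \<Rightarrow> nat \<Rightarrow> real \<Rightarrow> real^'d^'d" where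
  "gram Xa ma lam = (\<Sum>i<ma. (\<chi> j k. Xa i $ j * Xa i $ k)) + lam *\<^sub>R mat 1"

definition theta_hat :: "(nat \<Rightarrow> real^'d) \<Rightarrow> nat \<Rightarrow> real \<Rightarrow> (nat \<Rightarrow> real) \<Rightarrow> real^'d" where
  "theta_hat Xa ma lam ya = matrix_inv (gram Xa ma lam) *v (\<Sum>i<ma. ya i *\<^sub>R Xa i)"

definition vnorm :: "(nat \<Rightarrow> real^'d) \<Rightarrow> nat \<Rightarrow> real \<Rightarrow> real^'d \<Rightarrow> real" where
  "vnorm Xa ma lam x = sqrt (x \<bullet> (matrix_inv (gram Xa ma lam) *v x))"

definition ucb :: "(nat \<Rightarrow> real^'d) \<Rightarrow> nat \<Rightarrow> real \<Rightarrow> real \<Rightarrow> (nat \<Rightarrow> real) \<Rightarrow> real^'d \<Rightarrow> real" where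
  "ucb Xa ma lam al ya x = x \<bullet> theta_hat Xa ma lam ya + al * vnorm Xa ma lam x"

definition strongly_attackable ::
  "nat \<Rightarrow> (nat \<Rightarrow> nat \<Rightarrow> real^'d) \<Rightarrow> (nat \<Rightarrow> nat) \<Rightarrow> (nat \<Rightarrow> nat \<Rightarrow> real) \<Rightarrow> (nat \<Rightarrow> real)
    \<Rightarrow> real \<Rightarrow> real \<Rightarrow> nat \<Rightarrow> real^'d \<Rightarrow> bool" where
  "strongly_attackable K X m y alpha lam eps astar x \<longleftrightarrow>
     (\<exists>\<Delta> :: nat \<Rightarrow> nat \<Rightarrow> real. \<forall>a\<in>{1..K}. a \<noteq> astar \<longrightarrow>
        ucb (X astar) (m astar) lam (alpha astar) (\<lambda>i. y astar i + \<Delta> astar i) x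
          \<ge> eps + ucb (X a) (m a) lam (alpha a) (\<lambda>i. y a i + \<Delta> a i) x)"

definition in_null :: "(nat \<Rightarrow> real^'d) \<Rightarrow> nat \<Rightarrow> real^'d \<Rightarrow> bool" where
  "in_null Xa ma x \<longleftrightarrow> (\<forall>i<ma. Xa i \<bullet> x = 0)"

end

theory Submission
  imports Defs
begin

lemma vm_gram:
  fixes u :: "real^'d"
  shows "u v* gram Xa ma lam = (\<Sum>i<ma. (Xa i \<bullet> u) *\<^sub>R Xa i) + lam *\<^sub>R u"
proof -
  have "(u v* gram Xa ma lam) $ k = ((\<Sum>i<ma. (Xa i \<bullet> u) *\<^sub>R Xa i) + lam *\<^sub>R u) $ k" for k
  proof -
    have "(u v* gram Xa ma lam) $ k = (\<Sum>j\<in>UNIV. ((\<Sum>i<ma. Xa i $ j * Xa i $ k) + lam * (if j = k then 1 else 0)) * u $ j)"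
      by (simp add: vector_matrix_mult_def gram_def mat_def mult.commute)
    also have "\<dots> = (\<Sum>j\<in>UNIV. (\<Sum>i<ma. Xa i $ j * Xa i $ k * u $ j)) + lam * u $ k"
    proof -
      have d: "(\<Sum>j\<in>UNIV. lam * (if j = k then 1 else 0) * u $ j) = lam * u $ k"
        by (simp add: if_distrib[of "\<lambda>t. lam * t * _"] cong: if_cong)
      show ?thesis
        by (simp only: distrib_right sum.distrib sum_distrib_right d)
    qed
    also have "\<dots> = (\<Sum>i<ma. (Xa i \<bullet> u) * Xa i $ k) + lam * u $ k"
      by (subst sum.swap) (simp add: inner_vec_def sum_distrib_left sum_distrib_right mult_ac)
    finally show ?thesis by simp
  qed
  then show ?thesis by (simp add: vec_eq_iff)
qed

lemma gram_inv:
  assumes "lam > 0"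
  shows "matrix_inv (gram Xa ma lam) ** gram Xa ma lam = mat 1"
proof -
  let ?G = "gram Xa ma lam"
  have "\<forall>z. transpose ?G *v z = 0 \<longrightarrow> z = 0"
  proof (intro allI impI)
    fix z :: "real^'a" assume "transpose ?G *v z = 0"
    then have h: "(\<Sum>i<ma. (Xa i \<bullet> z) *\<^sub>R Xa i) + lam *\<^sub>R z = 0"
      by (simp add: vm_gram)
    have "0 = z \<bullet> ((\<Sum>i<ma. (Xa i \<bullet> z) *\<^sub>R Xa i) + lam *\<^sub>R z)" by (simp add: h)
    also have "\<dots> = (\<Sum>i<ma. (Xa i \<bullet> z)^2) + lam * (z \<bullet> z)"
      by (simp add: inner_add_right inner_sum_right power2_eq_square inner_commute)
    finally have e: "(\<Sum>i<ma. (Xa i \<bullet> z)^2) + lam * (z \<bullet> z) = 0" by simp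
    have "(\<Sum>i<ma. (Xa i \<bullet> z)^2) \<ge> 0" by (simp add: sum_nonneg)
    moreover have "z \<bullet> z \<ge> 0" by simp
    ultimately have "lam * (z \<bullet> z) = 0" using e assms
      by (smt (verit) mult_nonneg_nonneg)
    then show "z = 0" using assms by simp
  qed
  then have "\<exists>B. B ** transpose ?G = mat 1" by (simp add: matrix_left_invertible_ker)
  then have "\<exists>B. ?G ** B = mat 1" by (simp add: left_invertible_transpose)
  then have "invertible ?G" by (simp add: invertible_right_inverse)
  then have "?G ** matrix_inv ?G = mat 1 \<and> matrix_inv ?G ** ?G = mat 1"
    unfolding invertible_def matrix_inv_def by (rule someI_ex)
  then show ?thesis by simp
qed

definition cvec :: "(nat \<Rightarrow> real^'d) \<Rightarrow> nat \<Rightarrow> real \<Rightarrow> real^'d \<Rightarrow> real^'d" where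
  "cvec Xa ma lam x = x v* matrix_inv (gram Xa ma lam)"

lemma ucb_lin:
  "ucb Xa ma lam al v x = (\<Sum>i<ma. v i * (Xa i \<bullet> cvec Xa ma lam x)) + al * vnorm Xa ma lam x"
proof -
  have "x \<bullet> theta_hat Xa ma lam v = cvec Xa ma lam x \<bullet> (\<Sum>i<ma. v i *\<^sub>R Xa i)"
    unfolding theta_hat_def cvec_def by (simp add: dot_lmul_matrix)
  also have "\<dots> = (\<Sum>i<ma. v i * (Xa i \<bullet> cvec Xa ma lam x))"
    by (simp add: inner_sum_right inner_commute)
  finally show ?thesis unfolding ucb_def by simp
qed

lemma x_decomp:
  assumes "lam > 0"
  shows "x = (\<Sum>i<ma. (Xa i \<bullet> cvec Xa ma lam x) *\<^sub>R Xa i) + lam *\<^sub>R cvec Xa ma lam x"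
proof -
  have "cvec Xa ma lam x v* gram Xa ma lam = x"
    unfolding cvec_def by (simp add: vector_matrix_mul_assoc gram_inv[OF assms])
  then show ?thesis by (simp add: vm_gram)
qed

lemma null_iff:
  assumes "lam > 0"
  shows "in_null Xa ma x \<longleftrightarrow> (\<forall>i<ma. Xa i \<bullet> cvec Xa ma lam x = 0)"
proof
  let ?u = "cvec Xa ma lam x"
  let ?w = "\<Sum>i<ma. (Xa i \<bullet> ?u) *\<^sub>R Xa i"
  assume n: "in_null Xa ma x"
  have xd: "x = ?w + lam *\<^sub>R ?u" by (rule x_decomp[OF assms])
  have "?w \<bullet> x = 0" using n unfolding in_null_def
    by (simp add: inner_sum_left)
  moreover have "?w \<bullet> x = ?w \<bullet> ?w + lam * (\<Sum>i<ma. (Xa i \<bullet> ?u)^2)"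
    by (subst (2) xd) (simp add: inner_add_right inner_sum_left power2_eq_square)
  ultimately have e: "?w \<bullet> ?w + lam * (\<Sum>i<ma. (Xa i \<bullet> ?u)^2) = 0" by simp
  have "(\<Sum>i<ma. (Xa i \<bullet> ?u)^2) \<ge> 0" by (simp add: sum_nonneg)
  moreover have "?w \<bullet> ?w \<ge> 0" by simp
  ultimately have "(\<Sum>i<ma. (Xa i \<bullet> ?u)^2) = 0" using e assms
    by (smt (verit) mult_nonneg_nonneg mult_pos_pos)
  then show "\<forall>i<ma. Xa i \<bullet> ?u = 0"
    by (simp add: sum_nonneg_eq_0_iff)
next
  let ?u = "cvec Xa ma lam x"
  assume z: "\<forall>i<ma. Xa i \<bullet> ?u = 0"
  have "x = (\<Sum>i<ma. (Xa i \<bullet> ?u) *\<^sub>R Xa i) + lam *\<^sub>R ?u" by (rule x_decomp[OF assms])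
  also have "\<dots> = lam *\<^sub>R ?u" using z by simp
  finally have xe: "x = lam *\<^sub>R ?u" .
  have "\<And>i. Xa i \<bullet> x = lam * (Xa i \<bullet> ?u)" by (metis xe inner_scaleR_right)
  then show "in_null Xa ma x" using z unfolding in_null_def by simp
qed

lemma ucb_hit:
  fixes Xa :: "nat \<Rightarrow> real^'d" and ma :: nat and lam al t :: real and x :: "real^'d" and ya :: "nat \<Rightarrow> real"
  defines "c \<equiv> \<lambda>i. Xa i \<bullet> cvec Xa ma lam x"
  defines "S \<equiv> \<Sum>i<ma. (c i)^2"
  defines "N \<equiv> al * vnorm Xa ma lam x"
  assumes "S > 0"
  shows "ucb Xa ma lam al (\<lambda>i. ya i + ((t - N) / S * c i - ya i)) x = t"
proof -
  have "(\<Sum>i<ma. (ya i + ((t - N) / S * c i - ya i)) * c i) = (t - N) / S * S"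
    unfolding S_def by (simp add: sum_distrib_left sum_divide_distrib power2_eq_square mult_ac)
  also have "\<dots> = t - N" using assms(4) by simp
  finally show ?thesis unfolding ucb_lin c_def N_def by simp
qed

lemma ucb_zero:
  assumes "\<forall>i<ma. Xa i \<bullet> cvec Xa ma lam x = 0"
  shows "ucb Xa ma lam al v x = al * vnorm Xa ma lam x"
  using assms by (simp add: ucb_lin)

theorem theorem1:
  fixes K :: nat and X :: "nat \<Rightarrow> nat \<Rightarrow> real^'d" and m :: "nat \<Rightarrow> nat"
    and y :: "nat \<Rightarrow> nat \<Rightarrow> real" and alpha :: "nat \<Rightarrow> real"
    and lam eps :: real and astar :: nat and x :: "real^'d"
  assumes "K \<ge> 1" and "lam > 0" and "eps > 0" and "astar \<in> {1..K}"
  shows "\<not> strongly_attackable K X m y alpha lam eps astar x \<longleftrightarrow>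
    (\<exists>a\<in>{1..K}. a \<noteq> astar \<and> in_null (X astar) (m astar) x \<and> in_null (X a) (m a) x \<and>
       alpha astar * vnorm (X astar) (m astar) lam x < eps + alpha a * vnorm (X a) (m a) lam x)"
proof -
  define c where "c = (\<lambda>a i. X a i \<bullet> cvec (X a) (m a) lam x)"
  define S where "S = (\<lambda>a. \<Sum>i<m a. (c a i)^2)"
  define N where "N = (\<lambda>a. alpha a * vnorm (X a) (m a) lam x)"
  have Sge: "S a \<ge> 0" for a unfolding S_def by (simp add: sum_nonneg)
  have S0: "S a = 0 \<longleftrightarrow> (\<forall>i<m a. X a i \<bullet> cvec (X a) (m a) lam x = 0)" for a
    unfolding S_def c_def by (auto simp: sum_nonneg_eq_0_iff)
  have nullS: "in_null (X a) (m a) x \<longleftrightarrow> S a = 0" for a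
    using null_iff[OF assms(2)] S0 by blast
  have zero: "S a = 0 \<Longrightarrow> ucb (X a) (m a) lam (alpha a) v x = N a" for a v
    using ucb_zero S0 N_def by blast
  have hit: "S a > 0 \<Longrightarrow> ucb (X a) (m a) lam (alpha a) (\<lambda>i. y a i + ((t - N a) / S a * c a i - y a i)) x = t" for a t
    using ucb_hit[of "X a" "m a" lam x "alpha a" "y a" t] unfolding S_def c_def N_def by blast
  show ?thesis
  proof
    assume na: "\<not> strongly_attackable K X m y alpha lam eps astar x"
    show "\<exists>a\<in>{1..K}. a \<noteq> astar \<and> in_null (X astar) (m astar) x \<and> in_null (X a) (m a) x \<and>
       alpha astar * vnorm (X astar) (m astar) lam x < eps + alpha a * vnorm (X a) (m a) lam x"
    proof (rule ccontr)
      assume nr: "\<not> ?thesis"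
      define T where "T = (if S astar > 0 then eps + (\<Sum>b\<in>{1..K}. \<bar>N b\<bar>) else N astar)"
      define tgt where "tgt = (\<lambda>b. if b = astar then T else (if S astar > 0 then 0 else N astar - eps))"
      define D where "D = (\<lambda>b i. if S b > 0 then (tgt b - N b) / S b * c b i - y b i else 0)"
      have U: "ucb (X b) (m b) lam (alpha b) (\<lambda>i. y b i + D b i) x = (if S b > 0 then tgt b else N b)" for b
      proof (cases "S b > 0")
        case True then show ?thesis unfolding D_def using hit[OF True] by simp
      next
        case False then have "S b = 0" using Sge[of b] by linarith
        then show ?thesis using zero False by simp
      qed
      have "strongly_attackable K X m y alpha lam eps astar x"
        unfolding strongly_attackable_def
      proof (intro exI[of _ D] ballI impI)
        fix a assume a: "a \<in> {1..K}" "a \<noteq> astar"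
        have Ua: "ucb (X astar) (m astar) lam (alpha astar) (\<lambda>i. y astar i + D astar i) x = (if S astar > 0 then T else N astar)"
          using U[of astar] unfolding tgt_def T_def by simp
        show "ucb (X astar) (m astar) lam (alpha astar) (\<lambda>i. y astar i + D astar i) x
          \<ge> eps + ucb (X a) (m a) lam (alpha a) (\<lambda>i. y a i + D a i) x"
        proof (cases "S astar > 0")
          case True
          have "\<bar>N a\<bar> \<le> (\<Sum>b\<in>{1..K}. \<bar>N b\<bar>)"
            using a(1) by (intro member_le_sum) auto
          moreover have "(\<Sum>b\<in>{1..K}. \<bar>N b\<bar>) \<ge> 0" by (simp add: sum_nonneg)
          ultimately show ?thesis using Ua U[of a] True a(2) unfolding T_def tgt_def by auto
        next
          case False
          then have s0: "S astar = 0" using Sge[of astar] by linarith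
          show ?thesis
          proof (cases "S a > 0")
            case True then show ?thesis using Ua U[of a] False a(2) unfolding tgt_def by simp
          next
            case F2: False
            then have "S a = 0" using Sge[of a] by linarith
            then have "N astar \<ge> eps + N a"
              using nr a s0 nullS unfolding N_def by force
            then show ?thesis using Ua U[of a] False F2 by simp
          qed
        qed
      qed
      then show False using na by simp
    qed
  next
    assume "\<exists>a\<in>{1..K}. a \<noteq> astar \<and> in_null (X astar) (m astar) x \<and> in_null (X a) (m a) x \<and>
       alpha astar * vnorm (X astar) (m astar) lam x < eps + alpha a * vnorm (X a) (m a) lam x"
    then obtain a where a: "a \<in> {1..K}" "a \<noteq> astar" "S astar = 0" "S a = 0" "N astar < eps + N a"
      using nullS unfolding N_def by blast
    show "\<not> strongly_attackable K X m y alpha lam eps astar x"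
      unfolding strongly_attackable_def
    proof
      assume "\<exists>\<Delta>. \<forall>a\<in>{1..K}. a \<noteq> astar \<longrightarrow>
        ucb (X astar) (m astar) lam (alpha astar) (\<lambda>i. y astar i + \<Delta> astar i) x
          \<ge> eps + ucb (X a) (m a) lam (alpha a) (\<lambda>i. y a i + \<Delta> a i) x"
      then obtain \<Delta> where "ucb (X astar) (m astar) lam (alpha astar) (\<lambda>i. y astar i + \<Delta> astar i) x
          \<ge> eps + ucb (X a) (m a) lam (alpha a) (\<lambda>i. y a i + \<Delta> a i) x"
        using a(1,2) by blast
      then show False using zero[OF a(3)] zero[OF a(4)] a(5) by simp
    qed
  qed
qed

end
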